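(* Let $a$ be a primitive element of $GF(2^m)$ with $m\ge\lceil\log_2 n\rceil$, $n\le 2^m-1$, let $\alpha\ge1$ with $\gcd(2^m-1,\alpha)=1$, and $d=2\alpha\le n-1$. Let $g(x)=\prod_{i=0}^{n-\alpha-1}(x-a^i)$ be the generator polynomial of the $[n,\alpha]$ Reed–Solomon code $C_{0\alpha}$ (all vectors whose polynomial is divisible by $g(x)$). For $0\le i\le\alpha-1$ write $x^{n-\alpha+i}=u_i(x)g(x)+b_i(x)$ with $b_i(x)=\sum_{j=0}^{n-\alpha-1}b_{ij}x^j$, and let $\bar G$ be the $\alpha\times n$ matrix whose $i$-th row ($0\le i\le \alpha-1$) is $(b_{i0},b_{i1},\dots,b_{i(n-\alpha-1)},\mathbf{e}_i)$, where $\mathbf{e}_i$ is the $i$-th standard unit vector of length $\alpha$. Let $\gamma\neq0$ and let $\Delta$ be the diagonal matrix with diagonal entries $\gamma(a^i)^\alpha$, $i=0,\dots,n-1$. Then $G=\begin{bmatrix}\bar G\\ \bar G\Delta\end{bmatrix}$ is a least-update-complexity generator matrix.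
   Context: Vectors are identified with polynomials via $(c_0,\dots,c_{n-1})\leftrightarrow\sum c_ix^i$. The update complexity of a matrix is the maximum, over its rows, of the number of nonzero entries in the row. "Least-update-complexity" means: among all matrices of the form $\begin{bmatrix}\bar G'\\ \bar G'\Delta'\end{bmatrix}$ with $\bar G'$ a generator matrix of the $[n,\alpha]$ Reed–Solomon code $C_{0\alpha}$ and $\Delta'$ an $n\times n$ diagonal matrix, $G$ has the minimum update complexity. *)

theory Defs
  imports Complex_Main "HOL-Computational_Algebra.Polynomial" "Jordan_Normal_Form.Matrix"
begin

definition primitive_elem :: "'a::{field,finite} \<Rightarrow> bool" where
  "primitive_elem a \<longleftrightarrow> a \<noteq> 0 \<and> (\<forall>x. x \<noteq> 0 \<longrightarrow> (\<exists>i::nat. x = a ^ i))"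

definition vec_poly :: "'a::zero vec \<Rightarrow> 'a poly" where
  "vec_poly v = Poly (list_of_vec v)"

definition rs_gen_poly :: "'a::field \<Rightarrow> nat \<Rightarrow> nat \<Rightarrow> 'a poly" where
  "rs_gen_poly a n \<alpha> = (\<Prod>i<n - \<alpha>. [:- (a ^ i), 1:])"

definition rs_code :: "'a::field \<Rightarrow> nat \<Rightarrow> nat \<Rightarrow> 'a vec set" where
  "rs_code a n \<alpha> = {v \<in> carrier_vec n. rs_gen_poly a n \<alpha> dvd vec_poly v}"

definition generator_matrix :: "'a::field vec set \<Rightarrow> nat \<Rightarrow> nat \<Rightarrow> 'a mat \<Rightarrow> bool" where
  "generator_matrix C k n M \<longleftrightarrow> M \<in> carrier_mat k n \<and>
     {transpose_mat M *\<^sub>v c | c. c \<in> carrier_vec k} = C \<and>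
     (\<forall>c \<in> carrier_vec k. transpose_mat M *\<^sub>v c = 0\<^sub>v n \<longrightarrow> c = 0\<^sub>v k)"

definition update_complexity :: "'a::zero mat \<Rightarrow> nat" where
  "update_complexity M =
     Max ({card {j. j < dim_col M \<and> M $$ (i, j) \<noteq> 0} | i. i < dim_row M} \<union> {0})"

definition rs_rem :: "'a::field \<Rightarrow> nat \<Rightarrow> nat \<Rightarrow> nat \<Rightarrow> 'a poly" where
  "rs_rem a n \<alpha> i = monom 1 (n - \<alpha> + i) mod rs_gen_poly a n \<alpha>"

definition rs_Gbar :: "'a::field \<Rightarrow> nat \<Rightarrow> nat \<Rightarrow> 'a mat" where
  "rs_Gbar a n \<alpha> = mat \<alpha> n (\<lambda>(i, j).
      if j < n - \<alpha> then coeff (rs_rem a n \<alpha> i) j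
      else if j - (n - \<alpha>) = i then 1 else 0)"

definition rs_Delta :: "'a::field \<Rightarrow> 'a \<Rightarrow> nat \<Rightarrow> nat \<Rightarrow> 'a mat" where
  "rs_Delta \<gamma> a n \<alpha> = mat n n (\<lambda>(i, j). if i = j then \<gamma> * (a ^ i) ^ \<alpha> else 0)"

definition least_update_complexity :: "'a::field vec set \<Rightarrow> nat \<Rightarrow> nat \<Rightarrow> 'a mat \<Rightarrow> bool" where
  "least_update_complexity C k n G \<longleftrightarrow>
     (\<exists>G0 D0. generator_matrix C k n G0 \<and> D0 \<in> carrier_mat n n \<and> diagonal_mat D0 \<and>
              G = G0 @\<^sub>r (G0 * D0)) \<and>
     (\<forall>G' D'. generator_matrix C k n G' \<and> D' \<in> carrier_mat n n \<and> diagonal_mat D' \<longrightarrow>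
              update_complexity G \<le> update_complexity (G' @\<^sub>r (G' * D')))"

end

theory Submission
  imports Defs
begin



lemma even_card_inv:
  fixes S :: "'a::ab_group_add set"
  assumes "finite S" "\<forall>x\<in>S. -x \<in> S \<and> -x \<noteq> x"
  shows "even (card S)"
  using assms
proof (induction "card S" arbitrary: S rule: less_induct)
  case less
  show ?case
  proof (cases "S = {}")
    case True then show ?thesis by simp
  next
    case False
    then obtain x where x: "x \<in> S" by blast
    let ?T = "S - {x, -x}"
    have sub: "{x, -x} \<subseteq> S" using x less.prems by auto
    have c: "card ?T = card S - 2" using sub less.prems x
      by (subst card_Diff_subset) auto
    have c2: "card S \<ge> 2" using sub less.prems x
      by (metis card_2_iff card_mono)
    have "even (card ?T)"
      apply (rule less.hyps)
      using c c2 less.prems apply auto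
      done
    then show ?thesis using c c2 by (metis add_diff_inverse_nat even_add even_numeral not_less)
  qed
qed

lemma char2:
  assumes "card (UNIV :: 'a::{field,finite} set) = 2 ^ m"
  shows "(x::'a) + x = 0"
proof -
  have one_two: "(1::'a) + 1 = 0"
  proof (rule ccontr)
    assume h: "(1::'a) + 1 \<noteq> 0"
    have "\<forall>y\<in>UNIV - {0::'a}. -y \<in> UNIV - {0} \<and> -y \<noteq> y"
    proof
      fix y :: 'a assume "y \<in> UNIV - {0}"
      then have y: "y \<noteq> 0" by simp
      have "-y \<noteq> y"
      proof
        assume "-y = y"
        then have "(1 + 1) * y = 0" by (simp add: distrib_right)
        then show False using h y by simp
      qed
      then show "-y \<in> UNIV - {0} \<and> -y \<noteq> y" using y by simp
    qed
    then have e: "even (card (UNIV - {0::'a}))" by (intro even_card_inv) auto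
    have "card (UNIV - {0::'a}) = card (UNIV::'a set) - 1" by (simp add: card_Diff_singleton)
    moreover have "card (UNIV::'a set) \<ge> 2"
    proof -
      have "{0, 1::'a} \<subseteq> UNIV" by simp
      then have "card {0,1::'a} \<le> card (UNIV::'a set)" by (intro card_mono) auto
      then show ?thesis by simp
    qed
    ultimately have "odd (card (UNIV::'a set))" using e by (metis add_diff_inverse_nat even_add odd_one le_trans one_le_numeral not_less numeral_le_one_iff semiring_norm(69))
    moreover have "m \<noteq> 0" using \<open>card (UNIV::'a set) \<ge> 2\<close> assms by (cases m) auto
    ultimately show False using assms by simp
  qed
  have "x + x = (1 + 1) * x" by (simp add: distrib_right)
  then show ?thesis using one_two by simp
qed



lemma coeff_vec_poly: "coeff (vec_poly v) j = (if j < dim_vec v then v $ j else 0)"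
  unfolding vec_poly_def by (simp add: nth_default_def)

lemma vec_poly_sum: "vec_poly v = (\<Sum>j<dim_vec v. monom (v $ j) j)"
  by (rule poly_eqI) (simp add: coeff_vec_poly coeff_sum coeff_monom)

lemma poly_vec_poly: "poly (vec_poly (v::'a::comm_ring_1 vec)) x = (\<Sum>j<dim_vec v. v $ j * x ^ j)"
  by (simp add: vec_poly_sum poly_sum poly_monom)

lemma pow_distinct:
  fixes a :: "'a::{field,finite}"
  assumes prim: "primitive_elem a" and ij: "i < j" "j < card (UNIV::'a set) - 1"
  shows "a ^ i \<noteq> a ^ j"
proof
  assume eq: "a ^ i = a ^ j"
  define d where "d = j - i"
  have a0: "a \<noteq> 0" using prim unfolding primitive_elem_def by simp
  have d0: "d > 0" "d < card (UNIV::'a set) - 1" using ij unfolding d_def by auto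
  have "a ^ j = a ^ i * a ^ d" unfolding d_def using ij by (simp add: power_add[symmetric])
  then have "a ^ i * a ^ d = a ^ i * 1" using eq by simp
  then have ad: "a ^ d = 1" using a0 by (simp del: mult_cancel_left1)
  have "UNIV - {0} \<subseteq> (\<lambda>r. a ^ r) ` {..<d}"
  proof
    fix x :: 'a assume "x \<in> UNIV - {0}"
    then obtain t where t: "x = a ^ t" using prim unfolding primitive_elem_def by auto
    have "a ^ t = (a ^ d) ^ (t div d) * a ^ (t mod d)"
      by (simp add: power_mult[symmetric] power_add[symmetric])
    then have "x = a ^ (t mod d)" using t ad by simp
    then show "x \<in> (\<lambda>r. a ^ r) ` {..<d}" using d0 by auto
  qed
  then have "card (UNIV - {0::'a}) \<le> card ((\<lambda>r. a ^ r) ` {..<d})" by (intro card_mono) auto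
  also have "\<dots> \<le> d" using card_image_le[of "{..<d}" "\<lambda>r. a ^ r"] by simp
  finally show False using d0 by (simp add: card_Diff_singleton)
qed

lemma gen_poly_root:
  assumes "i < n - \<alpha>"
  shows "poly (rs_gen_poly a n \<alpha>) (a ^ i) = 0"
  unfolding rs_gen_poly_def poly_prod using assms
  by (intro prod_zero) (auto intro!: bexI[of _ i])

lemma gen_poly_nz: "rs_gen_poly a n \<alpha> \<noteq> 0"
  unfolding rs_gen_poly_def by (simp add: prod_zero_iff)

lemma gen_poly_deg: "degree (rs_gen_poly a n \<alpha>) \<le> n - \<alpha>"
proof -
  have "degree (rs_gen_poly a n \<alpha>) \<le> (\<Sum>i<n - \<alpha>. degree [:- (a ^ i), 1:])"
    unfolding rs_gen_poly_def using degree_prod_sum_le[of "{..<n-\<alpha>}" "\<lambda>i. [:- (a ^ i), 1:]"]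
    by (simp add: o_def)
  then show ?thesis by simp
qed

lemma mds:
  fixes a :: "'a::{field,finite}"
  assumes prim: "primitive_elem a" and nq: "n \<le> card (UNIV::'a set) - 1"
    and v: "v \<in> carrier_vec n" and dv: "rs_gen_poly a n \<alpha> dvd vec_poly v"
    and w: "card {j. j < n \<and> v $ j \<noteq> 0} \<le> n - \<alpha>"
  shows "v = 0\<^sub>v n"
proof -
  define S where "S = {j. j < n \<and> v $ j \<noteq> 0}"
  have finS: "finite S" unfolding S_def by simp
  have dimv: "dim_vec v = n" using v by simp
  have root: "poly (vec_poly v) (a ^ i) = 0" if "i < n - \<alpha>" for i
  proof -
    obtain q where "vec_poly v = rs_gen_poly a n \<alpha> * q" using dv by (elim dvdE)
    then show ?thesis using gen_poly_root[of i n \<alpha> a] that by simp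
  qed
  have "S = {}"
  proof (rule ccontr)
    assume "S \<noteq> {}"
    then obtain k where kS: "k \<in> S" by blast
    define p where "p = (\<Prod>j\<in>S - {k}. [:- (a ^ j), 1:])"
    have "degree p \<le> (\<Sum>j\<in>S - {k}. degree [:- (a ^ j), 1:])"
      unfolding p_def using degree_prod_sum_le[of "S - {k}" "\<lambda>j. [:- (a ^ j), 1:]"] finS
      by (simp add: o_def)
    also have "\<dots> = card (S - {k})" by simp
    also have "\<dots> = card S - 1" using kS finS by simp
    finally have dp1: "degree p \<le> card S - 1" .
    have degp: "degree p < n - \<alpha>"
    proof -
      have "card S > 0" using kS finS card_gt_0_iff by blast
      then show "degree p < n - \<alpha>" using w dp1 unfolding S_def[symmetric] by linarith
    qed
    have "(\<Sum>j<n. v $ j * poly p (a ^ j)) = (\<Sum>j<n. v $ j * (\<Sum>i\<le>degree p. coeff p i * (a ^ j) ^ i))"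
      by (simp add: poly_altdef)
    also have "\<dots> = (\<Sum>i\<le>degree p. coeff p i * (\<Sum>j<n. v $ j * (a ^ i) ^ j))"
      by (simp add: sum_distrib_left sum.swap[of _ "{..<n}"] power_mult[symmetric] mult.commute mult.left_commute)
    also have "\<dots> = 0"
      using root degp by (intro sum.neutral) (auto simp: poly_vec_poly dimv)
    finally have s0: "(\<Sum>j<n. v $ j * poly p (a ^ j)) = 0" .
    have "(\<Sum>j<n. v $ j * poly p (a ^ j)) = v $ k * poly p (a ^ k)"
    proof -
      have kn: "k \<in> {..<n}" using kS unfolding S_def by auto
      have "(\<Sum>j\<in>{..<n} - {k}. v $ j * poly p (a ^ j)) = 0"
      proof (rule sum.neutral, rule ballI)
        fix j assume "j \<in> {..<n} - {k}"
        then show "v $ j * poly p (a ^ j) = 0"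
          unfolding p_def poly_prod S_def by (cases "v $ j = 0") (auto intro!: prod_zero)
      qed
      then show ?thesis using sum.remove[OF _ kn, of "\<lambda>j. v $ j * poly p (a ^ j)"] by simp
    qed
    moreover have "poly p (a ^ k) \<noteq> 0"
    proof -
      have "poly p (a ^ k) = (\<Prod>j\<in>S - {k}. a ^ k - a ^ j)" unfolding p_def poly_prod by simp
      moreover have "\<forall>j\<in>S - {k}. a ^ k - a ^ j \<noteq> 0"
      proof
        fix j assume j: "j \<in> S - {k}"
        have "j < n" "k < n" using j kS unfolding S_def by auto
        then show "a ^ k - a ^ j \<noteq> 0" using j nq pow_distinct[OF prim, of j k] pow_distinct[OF prim, of k j]
          by (cases "j < k") auto
      qed
      ultimately show ?thesis using finS by simp
    qed
    ultimately have "v $ k = 0" using s0 by simp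
    then show False using kS unfolding S_def by simp
  qed
  then show ?thesis using v unfolding S_def by (intro eq_vecI) auto
qed




lemma Gbar_dims[simp]: "dim_row (rs_Gbar a n \<alpha>) = \<alpha>" "dim_col (rs_Gbar a n \<alpha>) = n"
  "rs_Gbar a n \<alpha> \<in> carrier_mat \<alpha> n"
  unfolding rs_Gbar_def by auto

lemma Gbar_idx: "i < \<alpha> \<Longrightarrow> j < n \<Longrightarrow> rs_Gbar a n \<alpha> $$ (i,j) =
   (if j < n - \<alpha> then coeff (rs_rem a n \<alpha> i) j else if j - (n - \<alpha>) = i then 1 else 0)"
  unfolding rs_Gbar_def by simp

lemma rem_coeff: "n - \<alpha> \<le> j \<Longrightarrow> coeff (rs_rem a n \<alpha> i) j = 0"
proof -
  assume j: "n - \<alpha> \<le> j"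
  have "rs_rem a n \<alpha> i = 0 \<or> degree (rs_rem a n \<alpha> i) < degree (rs_gen_poly a n \<alpha>)"
    unfolding rs_rem_def using degree_mod_less[OF gen_poly_nz] by blast
  then show ?thesis using gen_poly_deg[of a n \<alpha>] j
    by (metis coeff_0 coeff_eq_0 le_less_trans less_le_trans)
qed

lemma Gbar_coeff: "i < \<alpha> \<Longrightarrow> j < n \<Longrightarrow> \<alpha> \<le> n \<Longrightarrow>
   rs_Gbar a n \<alpha> $$ (i,j) = coeff (rs_rem a n \<alpha> i + monom 1 (n - \<alpha> + i)) j"
proof -
  assume h: "i < \<alpha>" "j < n" "\<alpha> \<le> n"
  show ?thesis
  proof (cases "j < n - \<alpha>")
    case True
    then have "coeff (monom (1::'a) (n - \<alpha> + i)) j = 0" by (simp add: coeff_monom)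
    then show ?thesis using h True by (simp add: Gbar_idx)
  next
    case False
    then have r: "coeff (rs_rem a n \<alpha> i) j = 0" by (intro rem_coeff) simp
    have "(n - \<alpha> + i = j) = (j - (n - \<alpha>) = i)" using False by linarith
    then show ?thesis using h False r by (simp add: Gbar_idx coeff_monom)
  qed
qed

lemma Gt_idx: assumes "c \<in> carrier_vec \<alpha>" "j < n" shows
  "(transpose_mat (rs_Gbar a n \<alpha>) *\<^sub>v c) $ j = (\<Sum>i<\<alpha>. rs_Gbar a n \<alpha> $$ (i,j) * c $ i)"
proof -
  have "(transpose_mat (rs_Gbar a n \<alpha>) *\<^sub>v c) $ j = row (transpose_mat (rs_Gbar a n \<alpha>)) j \<bullet> c"
    using assms by (intro index_mult_mat_vec) simp
  also have "\<dots> = (\<Sum>i\<in>{0..<\<alpha>}. row (transpose_mat (rs_Gbar a n \<alpha>)) j $ i * c $ i)"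
    unfolding scalar_prod_def using assms by simp
  also have "\<dots> = (\<Sum>i<\<alpha>. rs_Gbar a n \<alpha> $$ (i,j) * c $ i)"
    unfolding atLeast0LessThan using assms by (intro sum.cong refl) simp
  finally show ?thesis .
qed

lemma Gt_dim[simp]: "transpose_mat (rs_Gbar a n \<alpha>) *\<^sub>v c \<in> carrier_vec n"
  by (rule carrier_vecI) simp

lemma vec_poly_Gt:
  assumes c: "c \<in> carrier_vec \<alpha>" and an: "\<alpha> \<le> n"
  shows "vec_poly (transpose_mat (rs_Gbar a n \<alpha>) *\<^sub>v c) =
     (\<Sum>i<\<alpha>. Polynomial.smult (c $ i) (rs_rem a n \<alpha> i + monom 1 (n - \<alpha> + i)))"
proof (rule poly_eqI)
  fix j
  show "coeff (vec_poly (transpose_mat (rs_Gbar a n \<alpha>) *\<^sub>v c)) j =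
     coeff (\<Sum>i<\<alpha>. Polynomial.smult (c $ i) (rs_rem a n \<alpha> i + monom 1 (n - \<alpha> + i))) j"
  proof (cases "j < n")
    case True
    have "coeff (vec_poly (transpose_mat (rs_Gbar a n \<alpha>) *\<^sub>v c)) j
        = (\<Sum>i<\<alpha>. rs_Gbar a n \<alpha> $$ (i,j) * c $ i)"
      using True c by (simp only: coeff_vec_poly Gt_idx) simp
    also have "\<dots> = (\<Sum>i<\<alpha>. c $ i * coeff (rs_rem a n \<alpha> i + monom 1 (n - \<alpha> + i)) j)"
      using True an by (intro sum.cong refl) (simp add: Gbar_coeff mult.commute)
    finally show ?thesis by (simp only: coeff_sum coeff_smult)
  next
    case False
    then show ?thesis using c an
      by (auto simp: coeff_vec_poly coeff_sum rem_coeff coeff_monom intro!: sum.neutral)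
  qed
qed

lemma row_dvd:
  assumes "card (UNIV :: 'a::{field,finite} set) = 2 ^ m"
  shows "rs_gen_poly (a::'a) n \<alpha> dvd rs_rem a n \<alpha> i + monom 1 (n - \<alpha> + i)"
proof -
  let ?g = "rs_gen_poly a n \<alpha>" and ?x = "monom (1::'a) (n - \<alpha> + i)"
  have pp: "rs_rem a n \<alpha> i + rs_rem a n \<alpha> i = 0"
    by (rule poly_eqI) (simp only: coeff_add coeff_0 char2[OF assms])
  have "?x = ?x div ?g * ?g + rs_rem a n \<alpha> i" unfolding rs_rem_def by simp
  then have "rs_rem a n \<alpha> i + ?x = ?x div ?g * ?g + (rs_rem a n \<alpha> i + rs_rem a n \<alpha> i)"
    by (metis add.commute add.left_commute)
  then have "rs_rem a n \<alpha> i + ?x = ?x div ?g * ?g" using pp by simp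
  then show ?thesis by simp
qed




lemma append_rows_idx:
  assumes "A \<in> carrier_mat r1 nc" "B \<in> carrier_mat r2 nc" "i < r1 + r2" "j < nc"
  shows "(A @\<^sub>r B) $$ (i,j) = (if i < r1 then A $$ (i,j) else B $$ (i - r1, j))"
  using assms unfolding append_rows_def by (simp add: index_mat_four_block)

lemma append_rows_dims:
  assumes "A \<in> carrier_mat r1 nc" "B \<in> carrier_mat r2 nc"
  shows "dim_row (A @\<^sub>r B) = r1 + r2" "dim_col (A @\<^sub>r B) = nc"
  using carrier_append_rows[OF assms] by auto

lemma Gt_top:
  assumes c: "c \<in> carrier_vec \<alpha>" and i: "i < \<alpha>" and an: "\<alpha> \<le> n"
  shows "(transpose_mat (rs_Gbar a n \<alpha>) *\<^sub>v c) $ (n - \<alpha> + i) = c $ i"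
proof -
  have "(transpose_mat (rs_Gbar a n \<alpha>) *\<^sub>v c) $ (n - \<alpha> + i)
      = (\<Sum>l<\<alpha>. rs_Gbar a n \<alpha> $$ (l, n - \<alpha> + i) * c $ l)"
    using c i an by (intro Gt_idx) auto
  also have "\<dots> = (\<Sum>l<\<alpha>. if i = l then c $ l else 0)"
  proof (intro sum.cong refl)
    fix l assume l: "l \<in> {..<\<alpha>}"
    have "\<not> n - \<alpha> + i < n - \<alpha>" "n - \<alpha> + i - (n - \<alpha>) = i" "n - \<alpha> + i < n" using i an by auto
    then show "rs_Gbar a n \<alpha> $$ (l, n - \<alpha> + i) * c $ l = (if i = l then c $ l else 0)"
      using Gbar_idx[of l \<alpha> "n - \<alpha> + i" n a] l by auto
  qed
  also have "\<dots> = c $ i" using i by simp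
  finally show ?thesis .
qed

lemma Gbar_gen:
  fixes a :: "'a::{field,finite}"
  assumes card: "card (UNIV :: 'a set) = 2 ^ m" and prim: "primitive_elem a"
    and nq: "n \<le> card (UNIV::'a set) - 1" and an: "\<alpha> \<le> n"
  shows "generator_matrix (rs_code a n \<alpha>) \<alpha> n (rs_Gbar a n \<alpha>)"
  unfolding generator_matrix_def
proof (intro conjI ballI impI)
  show "rs_Gbar a n \<alpha> \<in> carrier_mat \<alpha> n" by simp
next
  show "{transpose_mat (rs_Gbar a n \<alpha>) *\<^sub>v c |c. c \<in> carrier_vec \<alpha>} = rs_code a n \<alpha>"
  proof (intro equalityI subsetI)
    fix u assume "u \<in> {transpose_mat (rs_Gbar a n \<alpha>) *\<^sub>v c |c. c \<in> carrier_vec \<alpha>}"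
    then obtain c where c: "c \<in> carrier_vec \<alpha>" and u: "u = transpose_mat (rs_Gbar a n \<alpha>) *\<^sub>v c"
      by blast
    have "rs_gen_poly a n \<alpha> dvd
       (\<Sum>i<\<alpha>. Polynomial.smult (c $ i) (rs_rem a n \<alpha> i + monom 1 (n - \<alpha> + i)))"
      by (intro dvd_sum dvd_smult row_dvd[OF card])
    then show "u \<in> rs_code a n \<alpha>" unfolding rs_code_def u
      using vec_poly_Gt[OF c an, of a] by simp
  next
    fix v assume v: "v \<in> rs_code a n \<alpha>"
    then have vc: "v \<in> carrier_vec n" and vd: "rs_gen_poly a n \<alpha> dvd vec_poly v"
      unfolding rs_code_def by auto
    define c where "c = vec \<alpha> (\<lambda>i. v $ (n - \<alpha> + i))"
    have c: "c \<in> carrier_vec \<alpha>" unfolding c_def by (rule carrier_vecI) simp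
    let ?u = "transpose_mat (rs_Gbar a n \<alpha>) *\<^sub>v c"
    define w where "w = vec n (\<lambda>j. v $ j - ?u $ j)"
    have wc: "w \<in> carrier_vec n" unfolding w_def by (rule carrier_vecI) simp
    have uc: "?u \<in> carrier_vec n" by simp
    have "vec_poly w = vec_poly v - vec_poly ?u"
      by (rule poly_eqI) (use vc uc in \<open>simp add: coeff_vec_poly w_def\<close>)
    moreover have "rs_gen_poly a n \<alpha> dvd vec_poly ?u"
      using vec_poly_Gt[OF c an, of a] by (simp add: dvd_sum dvd_smult row_dvd[OF card])
    ultimately have wd: "rs_gen_poly a n \<alpha> dvd vec_poly w" using vd by (simp add: dvd_diff)
    have wz: "w $ j = 0" if "n - \<alpha> \<le> j" "j < n" for j
    proof -
      define i where "i = j - (n - \<alpha>)"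
      have i: "j = n - \<alpha> + i" "i < \<alpha>" using that an unfolding i_def by auto
      have "?u $ j = v $ j" using Gt_top[OF c i(2) an, of a] i c_def by simp
      then show ?thesis using that unfolding w_def by simp
    qed
    have "{j. j < n \<and> w $ j \<noteq> 0} \<subseteq> {..<n - \<alpha>}"
    proof
      fix j assume "j \<in> {j. j < n \<and> w $ j \<noteq> 0}"
      then show "j \<in> {..<n - \<alpha>}" using wz[of j] by (cases "n - \<alpha> \<le> j") auto
    qed
    then have "card {j. j < n \<and> w $ j \<noteq> 0} \<le> n - \<alpha>"
      using card_mono[of "{..<n - \<alpha>}"] by fastforce
    then have "w = 0\<^sub>v n" using mds[OF prim nq wc wd] by simp
    then have "v = ?u"
    proof (intro eq_vecI)
      fix j assume "j < dim_vec ?u"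
      then have j: "j < n" using uc by simp
      have "w $ j = 0" using \<open>w = 0\<^sub>v n\<close> j by simp
      then show "v $ j = ?u $ j" using j unfolding w_def by simp
    qed (use vc uc in simp)
    then show "v \<in> {transpose_mat (rs_Gbar a n \<alpha>) *\<^sub>v c |c. c \<in> carrier_vec \<alpha>}" using c by blast
  qed
next
  fix c :: "'a vec" assume c: "c \<in> carrier_vec \<alpha>"
    and z: "transpose_mat (rs_Gbar a n \<alpha>) *\<^sub>v c = 0\<^sub>v n"
  show "c = 0\<^sub>v \<alpha>"
  proof (rule eq_vecI)
    fix i assume "i < dim_vec (0\<^sub>v \<alpha> :: 'a vec)"
    then have i: "i < \<alpha>" by simp
    have "c $ i = (transpose_mat (rs_Gbar a n \<alpha>) *\<^sub>v c) $ (n - \<alpha> + i)"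
      using Gt_top[OF c i an] by simp
    also have "\<dots> = 0" using z i an by simp
    finally show "c $ i = 0\<^sub>v \<alpha> $ i" using i by simp
  qed (use c in simp)
qed




lemma uc_le:
  assumes "\<And>i. i < dim_row M \<Longrightarrow> card {j. j < dim_col M \<and> M $$ (i, j) \<noteq> 0} \<le> b"
  shows "update_complexity M \<le> b"
  unfolding update_complexity_def
proof (rule Max.boundedI)
  show "finite ({card {j. j < dim_col M \<and> M $$ (i, j) \<noteq> 0} |i. i < dim_row M} \<union> {0})"
    by (intro finite_UnI finite_image_set) auto
qed (use assms in auto)

lemma uc_ge:
  assumes "i < dim_row M"
  shows "card {j. j < dim_col M \<and> M $$ (i, j) \<noteq> 0} \<le> update_complexity M"
  unfolding update_complexity_def
proof (rule Max_ge)
  show "finite ({card {j. j < dim_col M \<and> M $$ (i, j) \<noteq> 0} |i. i < dim_row M} \<union> {0})"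
    by (intro finite_UnI finite_image_set) auto
qed (use assms in blast)

lemma Delta_props: "rs_Delta \<gamma> a n \<alpha> \<in> carrier_mat n n" "diagonal_mat (rs_Delta \<gamma> a n \<alpha>)"
  unfolding rs_Delta_def diagonal_mat_def by auto

lemma mult_diag_idx:
  assumes A: "A \<in> carrier_mat r n" and D: "D \<in> carrier_mat n n" and dg: "diagonal_mat D"
    and i: "i < r" and j: "j < n"
  shows "(A * D) $$ (i, j) = A $$ (i, j) * D $$ (j, j)"
proof -
  have "(A * D) $$ (i, j) = row A i \<bullet> col D j" using A D i j by (intro index_mult_mat) auto
  also have "\<dots> = (\<Sum>l\<in>{0..<n}. A $$ (i, l) * D $$ (l, j))"
    unfolding scalar_prod_def using A D i j by (intro sum.cong) auto
  also have "\<dots> = (\<Sum>l\<in>{0..<n}. if l = j then A $$ (i, j) * D $$ (j, j) else 0)"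
    using D dg j unfolding diagonal_mat_def by (intro sum.cong refl) auto
  also have "\<dots> = A $$ (i, j) * D $$ (j, j)" using j by simp
  finally show ?thesis .
qed

theorem corollary2:
  fixes a \<gamma> :: "'a::{field,finite}" and m n \<alpha> :: nat
  assumes "card (UNIV :: 'a set) = 2 ^ m"
    and "primitive_elem a"
    and "m \<ge> nat \<lceil>log 2 (real n)\<rceil>"
    and "n \<le> 2 ^ m - 1"
    and "\<alpha> \<ge> 1"
    and "gcd (2 ^ m - 1) \<alpha> = 1"
    and "2 * \<alpha> \<le> n - 1"
    and "\<gamma> \<noteq> 0"
  shows "least_update_complexity (rs_code a n \<alpha>) \<alpha> n
           (rs_Gbar a n \<alpha> @\<^sub>r (rs_Gbar a n \<alpha> * rs_Delta \<gamma> a n \<alpha>))"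
proof -
  have an: "\<alpha> \<le> n" using assms(5,7) by linarith
  have nq: "n \<le> card (UNIV::'a set) - 1" using assms(1,4) by simp
  let ?G = "rs_Gbar a n \<alpha>" and ?D = "rs_Delta \<gamma> a n \<alpha>"
  have gen: "generator_matrix (rs_code a n \<alpha>) \<alpha> n ?G"
    by (rule Gbar_gen[OF assms(1,2) nq an])
  have Gc: "?G \<in> carrier_mat \<alpha> n" by simp
  have Dc: "?D \<in> carrier_mat n n" and Dd: "diagonal_mat ?D" by (rule Delta_props)+
  have GDc: "?G * ?D \<in> carrier_mat \<alpha> n" using Gc Dc by (rule mult_carrier_mat)
  have ucG: "update_complexity (?G @\<^sub>r (?G * ?D)) \<le> n - \<alpha> + 1"
  proof (rule uc_le)
    fix i assume "i < dim_row (?G @\<^sub>r (?G * ?D))"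
    then have i: "i < \<alpha> + \<alpha>" using append_rows_dims[OF Gc GDc] by simp
    define i' where "i' = (if i < \<alpha> then i else i - \<alpha>)"
    have i': "i' < \<alpha>" using i unfolding i'_def by auto
    have "{j. j < dim_col (?G @\<^sub>r (?G * ?D)) \<and> (?G @\<^sub>r (?G * ?D)) $$ (i, j) \<noteq> 0}
          \<subseteq> {..<n - \<alpha>} \<union> {n - \<alpha> + i'}"
    proof
      fix j assume "j \<in> {j. j < dim_col (?G @\<^sub>r (?G * ?D)) \<and> (?G @\<^sub>r (?G * ?D)) $$ (i, j) \<noteq> 0}"
      then have j: "j < n" and nz: "(?G @\<^sub>r (?G * ?D)) $$ (i, j) \<noteq> 0"
        using append_rows_dims[OF Gc GDc] by auto
      have "(?G @\<^sub>r (?G * ?D)) $$ (i, j) = (if i < \<alpha> then ?G $$ (i, j) else (?G * ?D) $$ (i - \<alpha>, j))"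
        by (rule append_rows_idx[OF Gc GDc i j])
      also have "\<dots> = (if i < \<alpha> then ?G $$ (i', j) else ?G $$ (i', j) * ?D $$ (j, j))"
        using mult_diag_idx[OF Gc Dc Dd _ j, of "i - \<alpha>"] i unfolding i'_def by auto
      finally have "?G $$ (i', j) \<noteq> 0" using nz by (cases "i < \<alpha>") auto
      then show "j \<in> {..<n - \<alpha>} \<union> {n - \<alpha> + i'}"
        using Gbar_idx[OF i' j, of a] by (cases "j < n - \<alpha>"; cases "j - (n - \<alpha>) = i'") auto
    qed
    then have "card {j. j < dim_col (?G @\<^sub>r (?G * ?D)) \<and> (?G @\<^sub>r (?G * ?D)) $$ (i, j) \<noteq> 0}
          \<le> card ({..<n - \<alpha>} \<union> {n - \<alpha> + i'})" by (rule card_mono[rotated]) auto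
    also have "\<dots> \<le> card {..<n - \<alpha>} + card {n - \<alpha> + i'}" by (rule card_Un_le)
    finally show "card {j. j < dim_col (?G @\<^sub>r (?G * ?D)) \<and> (?G @\<^sub>r (?G * ?D)) $$ (i, j) \<noteq> 0}
          \<le> n - \<alpha> + 1" by simp
  qed
  have ucG': "n - \<alpha> + 1 \<le> update_complexity (G' @\<^sub>r (G' * D'))"
    if g': "generator_matrix (rs_code a n \<alpha>) \<alpha> n G'" and d': "D' \<in> carrier_mat n n" "diagonal_mat D'"
    for G' D' :: "'a mat"
  proof -
    have G'c: "G' \<in> carrier_mat \<alpha> n" and
      sp: "{transpose_mat G' *\<^sub>v c | c. c \<in> carrier_vec \<alpha>} = rs_code a n \<alpha>" and
      ind: "\<forall>c \<in> carrier_vec \<alpha>. transpose_mat G' *\<^sub>v c = 0\<^sub>v n \<longrightarrow> c = 0\<^sub>v \<alpha>"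
      using g' unfolding generator_matrix_def by auto
    have GD'c: "G' * D' \<in> carrier_mat \<alpha> n" using G'c d'(1) by (rule mult_carrier_mat)
    have a0: "0 < \<alpha>" using assms(5) by simp
    define e where "e = (unit_vec \<alpha> 0 :: 'a vec)"
    have ec: "e \<in> carrier_vec \<alpha>" unfolding e_def by (rule unit_vec_carrier)
    define u where "u = transpose_mat G' *\<^sub>v e"
    have uC: "u \<in> rs_code a n \<alpha>" using sp ec unfolding u_def by blast
    then have uc: "u \<in> carrier_vec n" and ud: "rs_gen_poly a n \<alpha> dvd vec_poly u"
      unfolding rs_code_def by auto
    have unz: "u \<noteq> 0\<^sub>v n"
    proof
      assume "u = 0\<^sub>v n"
      then have "e = 0\<^sub>v \<alpha>" using ind ec unfolding u_def by blast
      moreover have "e $ 0 = 1" unfolding e_def using a0 by simp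
      ultimately show False using a0 by simp
    qed
    have uj: "u $ j = G' $$ (0, j)" if j: "j < n" for j
    proof -
      have "u $ j = row (transpose_mat G') j \<bullet> e" unfolding u_def
        using G'c j by (intro index_mult_mat_vec) simp
      also have "\<dots> = (\<Sum>l\<in>{0..<\<alpha>}. G' $$ (l, j) * e $ l)"
        unfolding scalar_prod_def e_def using G'c j by (intro sum.cong) auto
      also have "\<dots> = (\<Sum>l\<in>{0..<\<alpha>}. if l = 0 then G' $$ (0, j) else 0)"
        unfolding e_def by (intro sum.cong refl) auto
      also have "\<dots> = G' $$ (0, j)" using a0 by simp
      finally show ?thesis .
    qed
    have "\<not> card {j. j < n \<and> u $ j \<noteq> 0} \<le> n - \<alpha>"
      using mds[OF assms(2) nq uc ud] unz by blast
    then have "n - \<alpha> + 1 \<le> card {j. j < n \<and> u $ j \<noteq> 0}" by simp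
    also have "{j. j < n \<and> u $ j \<noteq> 0} =
        {j. j < dim_col (G' @\<^sub>r (G' * D')) \<and> (G' @\<^sub>r (G' * D')) $$ (0, j) \<noteq> 0}"
      using append_rows_dims[OF G'c GD'c] append_rows_idx[OF G'c GD'c, of 0] a0 uj by auto
    also have "card \<dots> \<le> update_complexity (G' @\<^sub>r (G' * D'))"
      by (rule uc_ge) (use append_rows_dims[OF G'c GD'c] a0 in simp)
    finally show ?thesis .
  qed
  show ?thesis
    unfolding least_update_complexity_def
  proof (intro conjI allI impI)
    show "\<exists>(G0::'a mat) (D0::'a mat). generator_matrix (rs_code a n \<alpha>) \<alpha> n G0 \<and> D0 \<in> carrier_mat n n \<and> diagonal_mat D0 \<and>
       ?G @\<^sub>r (?G * ?D) = G0 @\<^sub>r (G0 * D0)"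
      using gen Dc Dd by blast
  next
    fix G' D' :: "'a mat" assume "generator_matrix (rs_code a n \<alpha>) \<alpha> n G' \<and> D' \<in> carrier_mat n n \<and> diagonal_mat D'"
    then show "update_complexity (?G @\<^sub>r (?G * ?D)) \<le> update_complexity (G' @\<^sub>r (G' * D'))"
      using ucG ucG'[of G' D'] by auto
  qed
qed


end
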